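(* The Betti numbers of monomial ideals in 4 variables are independent of the base field: for any finite set $E$ of exponent vectors in $\mathbb{Z}_{\ge0}^4$ and any $i\ge 0$, the Betti number $\beta_i(S/M)$, where $S=k[x_1,x_2,x_3,x_4]$ and $M$ is the ideal generated by the monomials $x^{e}$, $e\in E$, takes the same value for every field $k$ (in particular it does not depend on the characteristic of $k$).
   Context: $\beta_i(S/M)=\dim_k\operatorname{Tor}_i^S(S/M,k)$. *)

theory Defs
  imports Main "HOL-Library.Numeral_Type" "HOL-Library.Extended_Nat" "HOL-Library.Function_Algebras"
begin

text \<open>Multigraded (fine-graded) encoding of Tor_i^S(S/M,k) for a monomial ideal M in
  S = k[x_v | v :: 'v], computed as the homology of S/M tensored with the Koszul resolution
  of k = S/(x_v). A monomial x^a lies in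
  M = (x^e | e in E) iff some generator x^e divides x^a.\<close>

definition in_monideal :: "('v \<Rightarrow> nat) set \<Rightarrow> ('v \<Rightarrow> nat) \<Rightarrow> bool" where
  "in_monideal E a \<longleftrightarrow> (\<exists>e\<in>E. \<forall>j. e j \<le> a j)"

definition ind_vec :: "'v set \<Rightarrow> 'v \<Rightarrow> nat" where
  "ind_vec F j = (if j \<in> F then 1 else 0)"

text \<open>Basis of the multidegree-b part of (S/M) \<otimes> K_i: the elements
  x^(b - e_F) \<otimes> e_F with |F| = i, e_F \<le> b and x^(b - e_F) not in M.\<close>
definition kbasis :: "('v \<Rightarrow> nat) set \<Rightarrow> ('v \<Rightarrow> nat) \<Rightarrow> nat \<Rightarrow> 'v set set" where
  "kbasis E b i = {F. card F = i \<and> (\<forall>j\<in>F. 1 \<le> b j) \<and>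
                      \<not> in_monideal E (\<lambda>j. b j - ind_vec F j)}"

definition ksign :: "'v::linorder set \<Rightarrow> 'v \<Rightarrow> 'k::field" where
  "ksign F j = (- 1) ^ card {l\<in>F. l < j}"

definition kchains :: "('v \<Rightarrow> nat) set \<Rightarrow> ('v \<Rightarrow> nat) \<Rightarrow> nat \<Rightarrow> ('v set \<Rightarrow> 'k::field) set" where
  "kchains E b i = {c. \<forall>F. F \<notin> kbasis E b i \<longrightarrow> c F = 0}"

text \<open>Koszul differential from degree i+1 to degree i:
  x^(b-e_F) e_F |-> sum_{j in F} sign(j,F) x_j x^(b-e_F) e_(F-{j}), where terms landing in M vanish.\<close>
definition kdiff :: "('v::{finite,linorder} \<Rightarrow> nat) set \<Rightarrow> ('v \<Rightarrow> nat) \<Rightarrow> nat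
                      \<Rightarrow> ('v set \<Rightarrow> 'k::field) \<Rightarrow> ('v set \<Rightarrow> 'k)" where
  "kdiff E b i c = (\<lambda>G. if G \<in> kbasis E b i then
      (\<Sum>j\<in>UNIV - G. if insert j G \<in> kbasis E b (Suc i)
                       then ksign (insert j G) j * c (insert j G) else 0)
      else 0)"

definition kcycles :: "('v::{finite,linorder} \<Rightarrow> nat) set \<Rightarrow> ('v \<Rightarrow> nat) \<Rightarrow> nat \<Rightarrow> ('v set \<Rightarrow> 'k::field) set" where
  "kcycles E b i = {c \<in> kchains E b i. 0 < i \<longrightarrow> kdiff E b (i - 1) c = (\<lambda>_. 0)}"

definition kboundaries :: "('v::{finite,linorder} \<Rightarrow> nat) set \<Rightarrow> ('v \<Rightarrow> nat) \<Rightarrow> nat \<Rightarrow> ('v set \<Rightarrow> 'k::field) set" where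
  "kboundaries E b i = kdiff E b i ` kchains E b (Suc i)"

definition kdim :: "('a \<Rightarrow> 'k::field) set \<Rightarrow> nat" where
  "kdim V = vector_space.dim (\<lambda>(r::'k) f x. r * f x) V"

definition tor_dim_deg :: "'k::field itself \<Rightarrow> ('v::{finite,linorder} \<Rightarrow> nat) set \<Rightarrow> nat \<Rightarrow> ('v \<Rightarrow> nat) \<Rightarrow> nat" where
  "tor_dim_deg _ E i b = kdim (kcycles E b i :: ('v set \<Rightarrow> 'k) set) - kdim (kboundaries E b i :: ('v set \<Rightarrow> 'k) set)"

text \<open>beta_i(S/M) = dim_k Tor_i^S(S/M,k) = sum over all multidegrees (possibly infinite a priori, hence enat).\<close>
definition betti :: "'k::field itself \<Rightarrow> ('v::{finite,linorder} \<Rightarrow> nat) set \<Rightarrow> nat \<Rightarrow> enat" where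
  "betti K E i = (SUP B\<in>{B. finite B}. \<Sum>b\<in>B. enat (tor_dim_deg K E i b))"

end

theory Submission
  imports Defs
begin

lemma sum_apply: "(\<Sum>i\<in>A. f i) x = (\<Sum>i\<in>A. f i x)"
  by (induct A rule: infinite_finite_induct) auto

lemma vs_fun: "vector_space (\<lambda>(r::'k::field) (f::'a \<Rightarrow> 'k) x. r * f x)"
  by unfold_locales (auto simp: fun_eq_iff algebra_simps)

interpretation fsp: vector_space "\<lambda>(r::'k::field) (f::'a \<Rightarrow> 'k) x. r * f x"
  by (rule vs_fun)

lemma fd_fun: "finite_dimensional_vector_space (\<lambda>(r::'k::field) (f::'a::finite \<Rightarrow> 'k) x. r * f x)
   (range (\<lambda>a x. if x = a then 1 else 0))"
proof (unfold_locales)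
  show "finite (range (\<lambda>a (x::'a). if x = a then 1::'k else 0))" by simp
  have inj: "inj (\<lambda>a (x::'a). if x = a then 1::'k else 0)"
    by (auto simp: inj_def fun_eq_iff)
  show "fsp.independent (range (\<lambda>a (x::'a). if x = a then 1::'k else 0))"
  proof (rule fsp.independent_if_scalars_zero)
    show "finite (range (\<lambda>a (x::'a). if x = a then 1::'k else 0))" by simp
    fix f :: "('a \<Rightarrow> 'k) \<Rightarrow> 'k" and x
    assume s: "(\<Sum>x\<in>range (\<lambda>a (x::'a). if x = a then 1::'k else 0). (\<lambda>xa. f x * x xa)) = 0"
      and x: "x \<in> range (\<lambda>a (x::'a). if x = a then 1::'k else 0)"
    then obtain a where a: "x = (\<lambda>xa. if xa = a then 1 else 0)" by auto
    have "(\<Sum>b\<in>UNIV. (\<lambda>xa. f (\<lambda>x. if x = b then 1 else 0) * (if xa = b then 1 else 0))) = 0"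
      using s by (simp add: sum.reindex[OF inj] comp_def)
    then have "(\<Sum>b\<in>UNIV. (\<lambda>xa. f (\<lambda>x. if x = b then 1 else 0) * (if xa = b then 1 else 0))) a = 0"
      by simp
    then have "(\<Sum>b\<in>UNIV. f (\<lambda>x. if x = b then 1 else 0) * (if a = b then 1 else 0)) = 0"
      by (simp add: sum_apply)
    then show "f x = 0" using a by (simp add: if_distrib cong: if_cong)
  qed
  show "fsp.span (range (\<lambda>a (x::'a). if x = a then 1::'k else 0)) = UNIV"
  proof (rule set_eqI, simp)
    fix g :: "'a \<Rightarrow> 'k"
    have "g = (\<Sum>a\<in>UNIV. (\<lambda>x. g a * (if x = a then 1 else 0)))"
      by (simp add: fun_eq_iff sum_apply if_distrib cong: if_cong)
    also have "\<dots> \<in> fsp.span (range (\<lambda>a (x::'a). if x = a then 1::'k else 0))"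
      by (intro fsp.span_sum fsp.span_scale[where c="g _", simplified] fsp.span_base) auto
    finally show "g \<in> fsp.span (range (\<lambda>a (x::'a). if x = a then 1::'k else 0))" .
  qed
qed

interpretation fsf: finite_dimensional_vector_space "\<lambda>(r::'k::field) (f::'a::finite \<Rightarrow> 'k) x. r * f x"
   "range (\<lambda>a x. if x = a then 1 else 0)"
  by (rule fd_fun)

fun rk :: "'r list \<Rightarrow> ('r \<Rightarrow> int) list \<Rightarrow> nat option" where
  "rk rows [] = Some 0"
| "rk rows (v # vs) = (case find (\<lambda>r. v r \<noteq> 0) rows of None \<Rightarrow> rk rows vs
     | Some r \<Rightarrow> if v r = 1 \<or> v r = -1 then map_option Suc (rk rows (map (\<lambda>w x. w x - w r * v r * v x) vs)) else None)"

lemma span_vanish: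
  assumes "\<forall>f\<in>S. f r = (0::'k::field)"
  shows "\<forall>f\<in>fsp.span S. f r = 0"
proof -
  have "fsp.subspace {f::'a \<Rightarrow> 'k. f r = 0}"
    by (auto simp: fsp.subspace_def)
  then have "fsp.span S \<subseteq> {f. f r = 0}"
    using assms by (intro fsp.span_minimal) auto
  then show ?thesis by auto
qed

lemma rk_correct:
  fixes rows :: "'r::finite list" and vs :: "('r \<Rightarrow> int) list"
  assumes "rk rows vs = Some n" "\<forall>v\<in>set vs. \<forall>x. v x \<noteq> 0 \<longrightarrow> x \<in> set rows"
  shows "fsp.dim ((\<lambda>v x. (of_int (v x)::'k::field)) ` set vs) = n"
using assms
proof (induction rows vs arbitrary: n rule: rk.induct)
  case (1 rows) then show ?case by simp
next
  case (2 rows v vs)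
  let ?o = "\<lambda>v x. (of_int (v x)::'k)"
  show ?case
  proof (cases "find (\<lambda>r. v r \<noteq> 0) rows")
    case None
    then have "\<forall>x\<in>set rows. v x = 0" by (simp add: find_None_iff)
    with "2.prems"(2) have v0: "?o v = 0" by (auto simp: fun_eq_iff) (metis of_int_0)
    from None "2.prems"(1) have "rk rows vs = Some n" by simp
    then have "fsp.dim (?o ` set vs) = n" using "2.IH"(1)[OF None] "2.prems"(2) by simp
    then show ?thesis using v0 fsf.dim_insert[of 0 "?o ` set vs"] by (simp add: fsp.span_zero)
  next
    case (Some r)
    then have vr: "v r \<noteq> 0" by (auto simp: find_Some_iff)
    have u: "v r = 1 \<or> v r = -1" using "2.prems"(1) Some by (auto split: if_splits)
    then have uu: "v r * v r = 1" by auto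
    define ws where "ws = map (\<lambda>w x. w x - w r * v r * v x) vs"
    obtain m where m: "rk rows ws = Some m" and n: "n = Suc m"
      using "2.prems"(1) Some u by (auto simp: ws_def)
    have supp: "\<forall>v\<in>set ws. \<forall>x. v x \<noteq> 0 \<longrightarrow> x \<in> set rows"
      using "2.prems"(2) by (auto simp: ws_def) (metis mult_zero_right)
    have IH: "fsp.dim (?o ` set ws) = m"
      using "2.IH"(2)[OF Some u, folded ws_def, OF m supp] .
    have wsr: "\<forall>f\<in>?o ` set ws. f r = 0"
      using uu by (auto simp: ws_def algebra_simps)
    have notin: "?o v \<notin> fsp.span (?o ` set ws)"
    proof
      assume "?o v \<in> fsp.span (?o ` set ws)"
      then have "(of_int (v r)::'k) = 0" using span_vanish[OF wsr] by auto
      then show False using u by auto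
    qed
    have eqw: "?o (\<lambda>x. w x - w r * v r * v x) = ?o w + (\<lambda>x. (- of_int (w r * v r)) * ?o v x)" for w
      by (simp add: fun_eq_iff)
    have eqv: "?o w = ?o (\<lambda>x. w x - w r * v r * v x) + (\<lambda>x. (of_int (w r * v r)) * ?o v x)" for w
      by (simp add: fun_eq_iff)
    have "fsp.span (insert (?o v) (?o ` set vs)) = fsp.span (insert (?o v) (?o ` set ws))"
      unfolding fsp.span_eq
    proof (intro conjI subsetI)
      fix f assume "f \<in> insert (?o v) (?o ` set vs)"
      then show "f \<in> fsp.span (insert (?o v) (?o ` set ws))"
      proof
        assume "f = ?o v" then show ?thesis by (simp add: fsp.span_base)
      next
        assume "f \<in> ?o ` set vs"
        then obtain w where w: "w \<in> set vs" "f = ?o w" by auto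
        have a: "?o (\<lambda>x. w x - w r * v r * v x) \<in> fsp.span (insert (?o v) (?o ` set ws))"
          by (rule fsp.span_base, rule insertI2, unfold ws_def set_map, rule imageI, rule imageI) (use w(1) in auto)
        have b: "(\<lambda>x. (of_int (w r * v r)) * ?o v x) \<in> fsp.span (insert (?o v) (?o ` set ws))"
          using fsp.span_scale[where c="of_int (w r * v r)", OF fsp.span_base[OF insertI1[of "?o v" "?o ` set ws"]]] by simp
        show ?thesis unfolding w(2) eqv[of w] by (rule fsp.span_add[OF a b])
      qed
    next
      fix f assume "f \<in> insert (?o v) (?o ` set ws)"
      then show "f \<in> fsp.span (insert (?o v) (?o ` set vs))"
      proof
        assume "f = ?o v" then show ?thesis by (simp add: fsp.span_base)
      next
        assume "f \<in> ?o ` set ws"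
        then obtain w where w: "w \<in> set vs" "f = ?o (\<lambda>x. w x - w r * v r * v x)" by (auto simp: ws_def)
        have a: "?o w \<in> fsp.span (insert (?o v) (?o ` set vs))"
          by (rule fsp.span_base) (use w(1) in auto)
        have b: "(\<lambda>x. (- of_int (w r * v r)) * ?o v x) \<in> fsp.span (insert (?o v) (?o ` set vs))"
          using fsp.span_scale[where c="- of_int (w r * v r)", OF fsp.span_base[OF insertI1[of "?o v" "?o ` set vs"]]] by simp
        show ?thesis unfolding w(2) eqw[of w] by (rule fsp.span_add[OF a b])
      qed
    qed
    then have "fsp.dim (?o ` set (v # vs)) = fsp.dim (insert (?o v) (?o ` set ws))"
      using fsp.span_eq_dim by auto
    also have "\<dots> = Suc m" using fsf.dim_insert[of "?o v" "?o ` set ws"] notin IH by simp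
    finally show ?thesis using n by simp
  qed
qed

lemma span_disjoint:
  fixes B :: "('a::finite \<Rightarrow> 'k::field) set"
  assumes B: "fsp.independent B" "K \<subseteq> B" and z: "z \<in> fsp.span K" "z \<in> fsp.span (B - K)"
  shows "z = 0"
proof -
  have fB: "finite B" using fsf.finiteI_independent[OF B(1)] .
  then have fK: "finite K" and fR: "finite (B - K)" using B(2) finite_subset by auto
  obtain a where za: "z = (\<Sum>v\<in>K. (\<lambda>x. a v * v x))"
    using z(1) fsp.span_finite[OF fK] by auto
  obtain c where zc: "z = (\<Sum>v\<in>B - K. (\<lambda>x. c v * v x))"
    using z(2) fsp.span_finite[OF fR] by auto
  define d where "d v = (if v \<in> K then a v else - c v)" for v
  have "(\<Sum>v\<in>B. (\<lambda>x. d v * v x)) = 0"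
  proof (rule ext)
    fix x
    have "(\<Sum>v\<in>B. (\<lambda>x. d v * v x)) x = (\<Sum>v\<in>B. d v * v x)" by (simp add: sum_apply)
    also have "\<dots> = (\<Sum>v\<in>K. d v * v x) + (\<Sum>v\<in>B - K. d v * v x)"
      using sum.subset_diff[OF B(2) fB] by (simp add: add.commute)
    also have "\<dots> = (\<Sum>v\<in>K. a v * v x) - (\<Sum>v\<in>B - K. c v * v x)"
      by (simp add: d_def sum_negf)
    also have "\<dots> = z x - z x"
      using arg_cong[OF za, of "\<lambda>g. g x"] arg_cong[OF zc, of "\<lambda>g. g x"] by (simp add: sum_apply)
    finally show "(\<Sum>v\<in>B. (\<lambda>x. d v * v x)) x = 0 x" by simp
  qed
  then have "\<forall>v\<in>B. d v = 0" using B(1) unfolding fsf.independent_explicit by blast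
  then have "\<forall>v\<in>K. a v = 0" using B(2) unfolding d_def by (metis subsetD)
  then have "(\<Sum>v\<in>K. (\<lambda>x. a v * v x)) = (\<Sum>v\<in>K. (0::'a\<Rightarrow>'k))"
    by (intro sum.cong) (auto simp: fun_eq_iff)
  then show ?thesis using za by (simp del: sum.neutral_const add: sum.neutral)
qed

lemma rank_nullity_fun:
  fixes f :: "('a::finite \<Rightarrow> 'k::field) \<Rightarrow> ('b::finite \<Rightarrow> 'k)"
  assumes add: "\<And>x y. f (x + y) = f x + f y" and scl: "\<And>c x. f (\<lambda>t. c * x t) = (\<lambda>t. c * f x t)"
    and S: "fsp.subspace S"
  shows "fsp.dim {x\<in>S. f x = 0} + fsp.dim (f ` S) = fsp.dim S"
proof -
  interpret lin: Vector_Spaces.linear "\<lambda>(r::'k) (f::'a \<Rightarrow> 'k) x. r * f x" "\<lambda>(r::'k) (f::'b \<Rightarrow> 'k) x. r * f x" f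
    by (auto simp: Vector_Spaces.linear_iff vs_fun add scl)
  let ?N = "{x\<in>S. f x = 0}"
  obtain K where K: "K \<subseteq> ?N" "fsp.independent K" "?N \<subseteq> fsp.span K" "card K = fsp.dim ?N"
    using fsp.basis_exists by blast
  obtain B where B: "K \<subseteq> B" "B \<subseteq> S" "fsp.independent B" "S \<subseteq> fsp.span B"
    using fsp.maximal_independent_subset_extend[of K S] K by auto
  have fB: "finite B" using fsf.finiteI_independent[OF B(3)] .
  have dS: "fsp.dim S = card B" using fsp.dim_unique[OF B(2) B(4) B(3) refl] .
  define R where "R = B - K"
  have spanS: "fsp.span B = S"
    using B(2,4) S fsp.span_minimal[OF B(2) S] fsp.span_mono by auto
  have spR: "fsp.span R \<subseteq> S" using fsp.span_minimal[OF _ S, of R] B(2) by (auto simp: R_def)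
  have inj: "inj_on f (fsp.span R)"
  proof (rule inj_onI)
    fix x y assume x: "x \<in> fsp.span R" and y: "y \<in> fsp.span R" and e: "f x = f y"
    have "x - y \<in> fsp.span R" using fsp.span_diff[OF x y] .
    moreover have "f (x - y) = 0" using e lin.diff by simp
    ultimately have "x - y \<in> ?N" using spR by auto
    then have "x - y \<in> fsp.span K" using K(3) by auto
    then have "x - y = 0" using span_disjoint[OF B(3) B(1), of "x - y"] \<open>x - y \<in> fsp.span R\<close> by (simp add: R_def)
    then show "x = y" by simp
  qed
  have indR: "fsp.independent (f ` R)"
    using lin.independent_injective_image[OF _ inj] fsp.independent_mono[OF B(3)] by (auto simp: R_def)
  have cardR: "card (f ` R) = card R"
    using card_image inj_on_subset[OF inj fsp.span_superset] by blast
  have "f ` S \<subseteq> fsp.span (f ` R)"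
  proof -
    have "f ` B \<subseteq> fsp.span (f ` R)"
    proof
      fix y assume "y \<in> f ` B"
      then obtain b where b: "b \<in> B" "y = f b" by auto
      show "y \<in> fsp.span (f ` R)"
      proof (cases "b \<in> K")
        case True then have "y = 0" using K(1) b by auto
        then show ?thesis by (simp add: fsp.span_zero)
      next
        case False then show ?thesis using b by (auto simp: R_def intro: fsp.span_base)
      qed
    qed
    then have "fsp.span (f ` B) \<subseteq> fsp.span (f ` R)"
      by (intro fsp.span_minimal) auto
    then show ?thesis using lin.span_image[of B] spanS by auto
  qed
  moreover have "f ` R \<subseteq> f ` S" using B(2) by (auto simp: R_def)
  ultimately have dI: "fsp.dim (f ` S) = card R"
    using fsp.dim_unique[OF _ _ indR cardR] by blast
  have "card B = card K + card R"
    using card_Un_disjoint[of K R] fB B(1) finite_subset[OF B(1) fB] by (simp add: R_def Un_absorb1)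
  then show ?thesis using dS dI K(4) by simp
qed

fun rkL :: "int list list \<Rightarrow> nat option" where
  "rkL [] = Some 0"
| "rkL (v # vs) = (case find (\<lambda>k. v!k \<noteq> 0) [0..<length v] of None \<Rightarrow> rkL vs
     | Some k \<Rightarrow> if v!k = 1 \<or> v!k = -1 then map_option Suc (rkL (map (\<lambda>w. map2 (\<lambda>a b. a - w!k * v!k * b) w v) vs)) else None)"

lemma find_map: "find P (map f xs) = map_option f (find (P \<circ> f) xs)"
  by (induction xs) auto

lemma find_nth: "find P xs = map_option (nth xs) (find (\<lambda>k. P (xs!k)) [0..<length xs])"
proof (induction xs)
  case Nil then show ?case by simp
next
  case (Cons x xs)
  have "[0..<length (x # xs)] = 0 # map Suc [0..<length xs]"
    by (simp add: upt_conv_Cons map_Suc_upt del: upt_Suc)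
  then show ?case using Cons by (simp add: find_map comp_def option.map_comp)
qed

lemma find_upt_map: "find (\<lambda>k. map v rows ! k \<noteq> 0) [0..<length rows] = find (\<lambda>k. v (rows!k) \<noteq> 0) [0..<length rows]"
  by (rule find_cong) auto

lemma map2_map_same: "map2 f (map g xs) (map h xs) = map (\<lambda>x. f (g x) (h x)) xs"
  by (induction xs) auto

lemma rk_rkL: "rk rows vs = rkL (map (\<lambda>v. map v rows) vs)"
proof (induction rows vs rule: rk.induct)
  case (1 rows) then show ?case by simp
next
  case (2 rows v vs)
  show ?case
  proof (cases "find (\<lambda>k. v (rows!k) \<noteq> 0) [0..<length rows]")
    case None
    then have "find (\<lambda>r. v r \<noteq> 0) rows = None" by (simp add: find_nth[of _ rows])
    then show ?thesis using None "2.IH"(1) by (simp add: find_upt_map)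
  next
    case (Some k)
    then have k: "k < length rows" by (auto simp: find_Some_iff)
    have f: "find (\<lambda>r. v r \<noteq> 0) rows = Some (rows!k)" using Some by (simp add: find_nth[of _ rows])
    have m: "map (\<lambda>w. map2 (\<lambda>a b. a - w ! k * map v rows ! k * b) w (map v rows)) (map (\<lambda>v. map v rows) vs)
       = map (\<lambda>v. map v rows) (map (\<lambda>w x. w x - w (rows!k) * v (rows!k) * v x) vs)"
      using k by (simp add: map2_map_same)
    show ?thesis
    proof (cases "v (rows!k) = 1 \<or> v (rows!k) = -1")
      case True
      have "rk rows (v#vs) = map_option Suc (rk rows (map (\<lambda>w x. w x - w (rows!k) * v (rows!k) * v x) vs))"
        using f True by simp
      also have "\<dots> = map_option Suc (rkL (map (\<lambda>v. map v rows) (map (\<lambda>w x. w x - w (rows!k) * v (rows!k) * v x) vs)))"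
        using "2.IH"(2)[OF f True] by simp
      also have "\<dots> = map_option Suc (rkL (map (\<lambda>w. map2 (\<lambda>a b. a - w ! k * map v rows ! k * b) w (map v rows)) (map (\<lambda>v. map v rows) vs)))"
        by (simp only: m)
      also have "\<dots> = rkL (map (\<lambda>v. map v rows) (v#vs))"
        using Some k True by (simp only: list.map rkL.simps find_upt_map option.case length_map if_True nth_map)
      finally show ?thesis .
    next
      case False
      then show ?thesis using Some k f by (simp add: find_upt_map)
    qed
  qed
qed

definition icolN :: "nat set set \<Rightarrow> nat set \<Rightarrow> nat set \<Rightarrow> int" where
  "icolN R F G = (if G \<in> R \<and> G \<subseteq> F \<and> card F = Suc (card G) then (-1) ^ card {l\<in>F. l < the_elem (F - G)} else 0)"

definition rowsN :: "nat set list" where "rowsN = map set (subseqs [0,1,2,3])"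
definition lvlN :: "nat \<Rightarrow> nat set list" where "lvlN i = filter (\<lambda>s. card s = i) rowsN"

definition checkN :: "nat \<Rightarrow> bool" where
 "checkN i = list_all (\<lambda>rs. list_all (\<lambda>cs. rkL (map (\<lambda>F. map (icolN (set rs) F) (lvlN i)) cs) \<noteq> None)
     (subseqs (lvlN (Suc i)))) (subseqs (lvlN i))"

lemma check0: "checkN 0" by code_simp
lemma check1: "checkN 1" by code_simp
lemma check2: "checkN 2" by code_simp
lemma check3: "checkN 3" by code_simp

definition icol :: "'v::linorder set set \<Rightarrow> 'v set \<Rightarrow> 'v set \<Rightarrow> int" where
  "icol R F G = (if G \<in> R \<and> G \<subseteq> F \<and> card F = Suc (card G) then (-1) ^ card {l\<in>F. l < the_elem (F - G)} else 0)"

lemma icol_transfer: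
  fixes \<phi> :: "'v::{linorder,finite} \<Rightarrow> nat"
  assumes mono: "\<And>x y. \<phi> x < \<phi> y \<longleftrightarrow> x < y"
  shows "icol R F G = icolN ((`) \<phi> ` R) (\<phi> ` F) (\<phi> ` G)"
proof -
  have inj: "inj \<phi>" using mono by (metis injI linorder_neqE_nat not_less_iff_gr_or_eq)
  have inj2: "inj ((`) \<phi>)" using inj by (simp add: inj_on_image)
  have m1: "\<phi> ` G \<in> (`) \<phi> ` R \<longleftrightarrow> G \<in> R" using inj_image_mem_iff[OF inj2] .
  have m2: "\<phi> ` G \<subseteq> \<phi> ` F \<longleftrightarrow> G \<subseteq> F" using inj_image_subset_iff[OF inj] .
  have c: "card (\<phi> ` A) = card A" for A using card_image inj inj_on_subset by blast
  show ?thesis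
  proof (cases "G \<in> R \<and> G \<subseteq> F \<and> card F = Suc (card G)")
    case False then show ?thesis unfolding icol_def icolN_def m1 m2 c by auto
  next
    case True
    then have "card (F - G) = 1" by (simp add: card_Diff_subset finite_subset)
    then obtain j where j: "F - G = {j}" by (rule card_1_singletonE)
    have j2: "\<phi> ` F - \<phi> ` G = {\<phi> j}" using j image_set_diff[OF inj, of F G] by simp
    have "{l\<in>\<phi> ` F. l < \<phi> j} = \<phi> ` {l\<in>F. l < j}" using mono by auto
    then have "card {l\<in>\<phi> ` F. l < \<phi> j} = card {l\<in>F. l < j}" using c by simp
    then show ?thesis using True unfolding icol_def icolN_def m1 m2 c j j2 by simp
  qed
qed

definition phi :: "4 \<Rightarrow> nat" where "phi x = nat (Rep_bit0 x)"

lemma phi_less: "phi x < phi y \<longleftrightarrow> x < y"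
  unfolding phi_def less_bit0_def using Rep_bit0[of x] Rep_bit0[of y] by auto

lemma phi_range: "range phi = {0..<4}"
proof
  show "range phi \<subseteq> {0..<4}"
  proof
    fix n assume "n \<in> range phi"
    then obtain x where "n = phi x" by auto
    moreover have "Rep_bit0 (x::4) \<in> {0..<2 * int CARD(num1 bit0)}" by (rule Rep_bit0)
    ultimately show "n \<in> {0..<4}" by (auto simp: phi_def)
  qed
  show "{0..<4} \<subseteq> range phi"
  proof
    fix n :: nat assume "n \<in> {0..<4}"
    then have "int n \<in> {0..<2 * int CARD(num1 bit0)}" by simp
    then have "Rep_bit0 (Abs_bit0 (int n) :: 4) = int n" by (rule Abs_bit0_inverse)
    then show "n \<in> range phi" unfolding phi_def by (metis nat_int rangeI)
  qed
qed

lemma phi_inj: "inj phi"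
  using phi_less by (metis injI linorder_neqE_nat not_less_iff_gr_or_eq)

lemma set_rowsN: "set rowsN = Pow {0..<4}"
proof -
  have "set rowsN = set ` set (subseqs [0,1,2,3::nat])" by (simp add: rowsN_def)
  also have "\<dots> = Pow {0..<4}" unfolding subseqs_powset
    by (rule arg_cong[where f=Pow]) auto
  finally show ?thesis .
qed

lemma set_lvlN: "set (lvlN i) = {s. s \<subseteq> {0..<4} \<and> card s = i}"
  by (auto simp: lvlN_def set_rowsN)

lemma card_4set: "card (F :: 4 set) \<le> 4"
  using card_mono[of "UNIV :: 4 set" F] by simp

lemma rank_some:
  fixes R C :: "4 set set"
  assumes C: "C \<subseteq> {F. card F = Suc i}"
  shows "\<exists>rows vs n. rk rows vs = Some n \<and> (\<forall>v\<in>set vs. \<forall>x. v x \<noteq> 0 \<longrightarrow> x \<in> set rows) \<and> set vs = icol R ` C"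
proof (cases "i < 4")
  case False
  have "C = {}"
  proof (rule ccontr)
    assume "C \<noteq> {}"
    then obtain F where "F \<in> C" by auto
    then have "card F = Suc i" using C by auto
    with card_4set[of F] False show False by simp
  qed
  then show ?thesis by (intro exI[of _ "[]"]) auto
next
  case True
  then have "i = 0 \<or> i = 1 \<or> i = 2 \<or> i = 3" by auto
  then have chk: "checkN i" using check0 check1 check2 check3 by auto
  define psi where "psi = image phi"
  define inv4 where "inv4 = image (inv phi)"
  have bck: "psi (inv4 s) = s" if "s \<subseteq> {0..<4}" for s
  proof -
    have "\<forall>x\<in>s. phi (inv phi x) = x"
    proof
      fix x assume "x \<in> s"
      then have "x \<in> range phi" using that phi_range by auto
      then show "phi (inv phi x) = x" by (rule f_inv_into_f)
    qed
    then have "(\<lambda>x. phi (inv phi x)) ` s = (\<lambda>x. x) ` s" by (intro image_cong) auto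
    then show ?thesis unfolding psi_def inv4_def image_image by simp
  qed
  have fwd: "inv4 (psi F) = F" for F
    unfolding psi_def inv4_def by (simp add: image_image inv_f_f[OF phi_inj])
  have psi_sub: "psi F \<subseteq> {0..<4}" for F using phi_range unfolding psi_def by auto
  have cardpsi: "card (psi F) = card F" for F
    unfolding psi_def by (simp add: card_image inj_on_subset[OF phi_inj])
  have "psi ` R \<inter> set (lvlN i) \<subseteq> set (lvlN i)" by simp
  then have "psi ` R \<inter> set (lvlN i) \<in> set ` set (subseqs (lvlN i))" by (rule subset_subseqs)
  then obtain rs where rs: "rs \<in> set (subseqs (lvlN i))" "set rs = psi ` R \<inter> set (lvlN i)"
    by (metis imageE)
  have "psi ` C \<subseteq> set (lvlN (Suc i))" using C psi_sub cardpsi by (auto simp: set_lvlN)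
  then have "psi ` C \<in> set ` set (subseqs (lvlN (Suc i)))" by (rule subset_subseqs)
  then obtain csN where csN: "csN \<in> set (subseqs (lvlN (Suc i)))" "set csN = psi ` C"
    by (metis imageE)
  have "\<forall>rs\<in>set (subseqs (lvlN i)). \<forall>cs\<in>set (subseqs (lvlN (Suc i))).
      rkL (map (\<lambda>F. map (icolN (set rs) F) (lvlN i)) cs) \<noteq> None"
    using chk unfolding checkN_def list_all_iff .
  then have "rkL (map (\<lambda>F. map (icolN (set rs) F) (lvlN i)) csN) \<noteq> None"
    using rs(1) csN(1) by blast
  then obtain n where n: "rkL (map (\<lambda>F. map (icolN (set rs) F) (lvlN i)) csN) = Some n"
    by auto
  define rows4 where "rows4 = map inv4 (lvlN i)"
  define cs4 where "cs4 = map inv4 csN"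
  have setcs: "set cs4 = C" unfolding cs4_def using csN(2) by (simp add: image_image fwd)
  have ent: "icol R (inv4 FN) (inv4 GN) = icolN (set rs) FN GN" if "FN \<in> set csN" "GN \<in> set (lvlN i)" for FN GN
  proof -
    have sub1: "FN \<subseteq> {0..<4}" using that(1) csN(2) psi_sub by auto
    have sub2: "GN \<subseteq> {0..<4}" using that(2) by (simp add: set_lvlN)
    note sub = sub1 sub2
    have "icol R (inv4 FN) (inv4 GN) = icolN (psi ` R) (psi (inv4 FN)) (psi (inv4 GN))"
      unfolding psi_def by (rule icol_transfer[OF phi_less])
    also have "\<dots> = icolN (psi ` R) FN GN" using bck sub by simp
    also have "\<dots> = icolN (set rs) FN GN" using that(2) rs(2) unfolding icolN_def by auto
    finally show ?thesis .
  qed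
  have eqmat: "map (\<lambda>v. map v rows4) (map (icol R) cs4) = map (\<lambda>F. map (icolN (set rs) F) (lvlN i)) csN"
    unfolding rows4_def cs4_def by (simp add: ent)
  have rk: "rk rows4 (map (icol R) cs4) = Some n" unfolding rk_rkL eqmat by (rule n)
  have supp: "\<forall>v\<in>set (map (icol R) cs4). \<forall>x. v x \<noteq> 0 \<longrightarrow> x \<in> set rows4"
  proof (intro ballI allI impI)
    fix v x assume v: "v \<in> set (map (icol R) cs4)" and x: "v x \<noteq> 0"
    then obtain F where F: "F \<in> C" "v = icol R F" using setcs by auto
    then have "card x = i" using x C by (auto simp: icol_def split: if_splits)
    then have "psi x \<in> set (lvlN i)" using psi_sub cardpsi by (simp add: set_lvlN)
    then show "x \<in> set rows4" unfolding rows4_def using fwd by (metis image_eqI set_map)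
  qed
  show ?thesis using rk supp setcs by (intro exI[of _ rows4] exI[of _ "map (icol R) cs4"] exI[of _ n]) auto
qed

lemma rank_indep:
  fixes R C :: "4 set set"
  assumes C: "C \<subseteq> {F. card F = Suc i}"
  shows "fsp.dim ((\<lambda>F G. (of_int (icol R F G)::'k::field)) ` C) = fsp.dim ((\<lambda>F G. (of_int (icol R F G)::'l::field)) ` C)"
proof -
  obtain rows vs n where r: "rk rows vs = Some n" "\<forall>v\<in>set vs. \<forall>x. v x \<noteq> 0 \<longrightarrow> x \<in> set rows" "set vs = icol R ` C"
    using rank_some[OF C] by blast
  have "fsp.dim ((\<lambda>v x. (of_int (v x)::'k)) ` set vs) = n" by (rule rk_correct[OF r(1,2)])
  moreover have "fsp.dim ((\<lambda>v x. (of_int (v x)::'l)) ` set vs) = n" by (rule rk_correct[OF r(1,2)])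
  ultimately show ?thesis using r(3) by (simp add: image_image)
qed

lemma kbasis_card: "F \<in> kbasis E b i \<Longrightarrow> card F = i"
  by (simp add: kbasis_def)

lemma kdiff_eq:
  fixes E :: "(4 \<Rightarrow> nat) set" and c :: "4 set \<Rightarrow> 'k::field"
  assumes c: "c \<in> kchains E b (Suc i)"
  shows "kdiff E b i c = (\<Sum>F\<in>kbasis E b (Suc i). (\<lambda>G. c F * of_int (icol (kbasis E b i) F G)))"
proof (rule ext)
  fix G :: "4 set"
  let ?B = "kbasis E b i" and ?B' = "kbasis E b (Suc i)"
  have rhs: "(\<Sum>F\<in>?B'. (\<lambda>G. c F * of_int (icol ?B F G))) G = (\<Sum>F\<in>?B'. c F * of_int (icol ?B F G))"
    by (simp add: sum_apply)
  show "kdiff E b i c G = (\<Sum>F\<in>?B'. (\<lambda>G. c F * of_int (icol ?B F G))) G"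
  proof (cases "G \<in> ?B")
    case False
    then show ?thesis unfolding rhs by (simp add: kdiff_def icol_def)
  next
    case True
    define J where "J = {j \<in> UNIV - G. insert j G \<in> ?B'}"
    define h where "h j = insert j G" for j
    have "kdiff E b i c G = (\<Sum>j\<in>UNIV - G. if insert j G \<in> ?B' then ksign (insert j G) j * c (insert j G) else 0)"
      using True by (simp add: kdiff_def)
    also have "\<dots> = (\<Sum>j\<in>J. ksign (insert j G) j * c (insert j G))"
      unfolding J_def by (rule sum.inter_filter[symmetric]) simp
    also have "\<dots> = (\<Sum>j\<in>J. c (h j) * of_int ((-1) ^ card {l\<in>h j. l < the_elem (h j - G)}))"
    proof (rule sum.cong[OF refl])
      fix j assume "j \<in> J"
      then have "j \<notin> G" by (simp add: J_def)
      then have "h j - G = {j}" by (auto simp: h_def)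
      then show "ksign (insert j G) j * c (insert j G) = c (h j) * of_int ((-1) ^ card {l\<in>h j. l < the_elem (h j - G)})"
        by (simp add: ksign_def h_def)
    qed
    also have "\<dots> = (\<Sum>F\<in>h ` J. c F * of_int ((-1) ^ card {l\<in>F. l < the_elem (F - G)}))"
    proof (rule sum.reindex[symmetric, unfolded comp_def])
      show "inj_on h J"
      proof (rule inj_onI)
        fix x y assume xy: "x \<in> J" "y \<in> J" "h x = h y"
        have "x \<in> insert y G" using xy(3) unfolding h_def by (metis insertI1)
        moreover have "x \<notin> G" using xy(1) by (simp add: J_def)
        ultimately show "x = y" by simp
      qed
    qed
    also have "h ` J = {F \<in> ?B'. G \<subseteq> F \<and> card F = Suc (card G)}"
    proof
      show "h ` J \<subseteq> {F \<in> ?B'. G \<subseteq> F \<and> card F = Suc (card G)}"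
        by (auto simp: h_def J_def)
      show "{F \<in> ?B'. G \<subseteq> F \<and> card F = Suc (card G)} \<subseteq> h ` J"
      proof
        fix F assume F: "F \<in> {F \<in> ?B'. G \<subseteq> F \<and> card F = Suc (card G)}"
        then have "card (F - G) = 1" by (simp add: card_Diff_subset finite_subset)
        then obtain j where j: "F - G = {j}" by (rule card_1_singletonE)
        then have "F = h j" "j \<notin> G" using F by (auto simp: h_def)
        moreover have "j \<in> J" using F \<open>F = h j\<close> \<open>j \<notin> G\<close> by (simp add: J_def h_def)
        ultimately show "F \<in> h ` J" by blast
      qed
    qed
    also have "(\<Sum>F\<in>{F \<in> ?B'. G \<subseteq> F \<and> card F = Suc (card G)}. c F * of_int ((-1) ^ card {l\<in>F. l < the_elem (F - G)}))
       = (\<Sum>F\<in>?B'. c F * of_int (icol ?B F G))"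
      by (subst sum.inter_filter) (auto simp: icol_def True intro!: sum.cong)
    finally show ?thesis unfolding rhs .
  qed
qed

lemma kdiff_add: "kdiff E b i (c1 + c2) = kdiff E b i c1 + kdiff E b i c2"
  by (auto simp: kdiff_def fun_eq_iff sum.distrib[symmetric] distrib_left intro!: sum.cong)

lemma kdiff_scale: "kdiff E b i (\<lambda>t. a * c t) = (\<lambda>G. a * kdiff E b i c G)"
  by (auto simp: kdiff_def fun_eq_iff sum_distrib_left intro!: sum.cong)

lemma kdiff_zero: "kdiff E b i 0 = 0"
  using kdiff_scale[of E b i 0 0] by (simp add: zero_fun_def)

lemma kchains_subspace: "fsp.subspace (kchains E b i)"
  by (auto simp: fsp.subspace_def kchains_def)

lemma kbound_subspace: "fsp.subspace (kboundaries E b i :: ('v::{finite,linorder} set \<Rightarrow> 'k::field) set)"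
  unfolding fsp.subspace_def kboundaries_def
proof (intro conjI ballI allI)
  show "0 \<in> kdiff E b i ` kchains E b (Suc i)"
    using kdiff_zero kchains_subspace by (metis fsp.subspace_0 image_eqI)
next
  fix x y :: "'v set \<Rightarrow> 'k" assume "x \<in> kdiff E b i ` kchains E b (Suc i)" "y \<in> kdiff E b i ` kchains E b (Suc i)"
  then obtain c1 c2 where "c1 \<in> kchains E b (Suc i)" "c2 \<in> kchains E b (Suc i)" "x = kdiff E b i c1" "y = kdiff E b i c2"
    by auto
  then show "x + y \<in> kdiff E b i ` kchains E b (Suc i)"
    using kdiff_add kchains_subspace by (metis fsp.subspace_add image_eqI)
next
  fix a :: 'k and x :: "'v set \<Rightarrow> 'k" assume "x \<in> kdiff E b i ` kchains E b (Suc i)"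
  then obtain c where "c \<in> kchains E b (Suc i)" "x = kdiff E b i c" by auto
  moreover have "(\<lambda>t. a * c t) \<in> kchains E b (Suc i)" using calculation by (auto simp: kchains_def)
  ultimately show "(\<lambda>xa. a * x xa) \<in> kdiff E b i ` kchains E b (Suc i)"
    using kdiff_scale[of E b i a c] by (metis image_eqI)
qed

lemma kbound_eq:
  fixes E :: "(4 \<Rightarrow> nat) set"
  shows "(kboundaries E b i :: (4 set \<Rightarrow> 'k::field) set)
     = fsp.span ((\<lambda>F G. (of_int (icol (kbasis E b i) F G)::'k)) ` kbasis E b (Suc i))"
    (is "_ = fsp.span (?col ` ?B')")
proof
  show "kboundaries E b i \<subseteq> fsp.span (?col ` ?B')"
  proof
    fix x :: "4 set \<Rightarrow> 'k" assume "x \<in> kboundaries E b i"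
    then obtain c where c: "c \<in> kchains E b (Suc i)" "x = kdiff E b i c"
      by (auto simp: kboundaries_def)
    have "x = (\<Sum>F\<in>?B'. (\<lambda>G. c F * ?col F G))" using kdiff_eq[OF c(1)] c(2) by simp
    also have "\<dots> \<in> fsp.span (?col ` ?B')"
    proof (rule fsp.span_sum)
      fix F assume "F \<in> ?B'"
      then have "?col F \<in> fsp.span (?col ` ?B')" by (intro fsp.span_base) auto
      then show "(\<lambda>G. c F * ?col F G) \<in> fsp.span (?col ` ?B')"
        using fsp.span_scale[where c="c F"] by auto
    qed
    finally show "x \<in> fsp.span (?col ` ?B')" .
  qed
next
  show "fsp.span (?col ` ?B') \<subseteq> kboundaries E b i"
  proof (rule fsp.span_minimal[OF _ kbound_subspace])
    show "?col ` ?B' \<subseteq> kboundaries E b i"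
    proof
      fix y assume "y \<in> ?col ` ?B'"
      then obtain F where F: "F \<in> ?B'" "y = ?col F" by auto
      define d :: "4 set \<Rightarrow> 'k" where "d = (\<lambda>H. if H = F then 1 else 0)"
      have d: "d \<in> kchains E b (Suc i)" using F by (auto simp: kchains_def d_def)
      have "kdiff E b i d = (\<Sum>F'\<in>?B'. (\<lambda>G. d F' * ?col F' G))" by (rule kdiff_eq[OF d])
      also have "\<dots> = ?col F"
      proof (rule ext)
        fix G
        have "(\<Sum>F'\<in>?B'. (\<lambda>G. d F' * ?col F' G)) G = (\<Sum>F'\<in>?B'. d F' * ?col F' G)"
          by (simp add: sum_apply)
        also have "\<dots> = (\<Sum>F'\<in>?B'. if F' = F then ?col F' G else 0)"
          by (rule sum.cong) (auto simp: d_def)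
        also have "\<dots> = ?col F G" using F(1) by simp
        finally show "(\<Sum>F'\<in>?B'. (\<lambda>G. d F' * ?col F' G)) G = ?col F G" .
      qed
      finally have "kdiff E b i d = ?col F" .
      then show "y \<in> kboundaries E b i" using d F(2) unfolding kboundaries_def by (metis image_eqI)
    qed
  qed
qed

lemma kchains_dim:
  "fsp.dim (kchains E b i :: ('v::{finite,linorder} set \<Rightarrow> 'k::field) set) = card (kbasis E b i)"
proof -
  define \<delta> :: "'v set \<Rightarrow> 'v set \<Rightarrow> 'k" where "\<delta> = (\<lambda>F x. if x = F then 1 else 0)"
  let ?B = "kbasis E b i"
  have inj: "inj \<delta>"
  proof (rule injI)
    fix F F' assume "\<delta> F = \<delta> F'"
    then have "\<delta> F F = \<delta> F' F" by simp
    then show "F = F'" by (auto simp: \<delta>_def split: if_splits)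
  qed
  show ?thesis
  proof (rule fsp.dim_unique[of "\<delta> ` ?B"])
    show "\<delta> ` ?B \<subseteq> kchains E b i" by (auto simp: kchains_def \<delta>_def)
    show "kchains E b i \<subseteq> fsp.span (\<delta> ` ?B)"
    proof
      fix c :: "'v set \<Rightarrow> 'k" assume c: "c \<in> kchains E b i"
      have "c = (\<Sum>F\<in>?B. (\<lambda>x. c F * \<delta> F x))"
      proof (rule ext)
        fix x
        have "(\<Sum>F\<in>?B. (\<lambda>x. c F * \<delta> F x)) x = (\<Sum>F\<in>?B. c F * \<delta> F x)" by (simp add: sum_apply)
        also have "\<dots> = (\<Sum>F\<in>?B. if x = F then c F else 0)"
          by (rule sum.cong) (auto simp: \<delta>_def)
        also have "\<dots> = c x" using c by (auto simp: kchains_def)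
        finally show "c x = (\<Sum>F\<in>?B. (\<lambda>x. c F * \<delta> F x)) x" by simp
      qed
      also have "\<dots> \<in> fsp.span (\<delta> ` ?B)"
      proof (rule fsp.span_sum)
        fix F assume "F \<in> ?B"
        then have "\<delta> F \<in> fsp.span (\<delta> ` ?B)" by (intro fsp.span_base) auto
        then show "(\<lambda>x. c F * \<delta> F x) \<in> fsp.span (\<delta> ` ?B)"
          using fsp.span_scale[where c="c F"] by auto
      qed
      finally show "c \<in> fsp.span (\<delta> ` ?B)" .
    qed
    show "fsp.independent (\<delta> ` ?B)"
      by (rule fsp.independent_mono[OF fsf.independent_Basis]) (auto simp: \<delta>_def)
    show "card (\<delta> ` ?B) = card ?B" using inj by (simp add: card_image inj_on_subset)
  qed
qed

lemma kbound_indep: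
  fixes E :: "(4 \<Rightarrow> nat) set"
  shows "kdim (kboundaries E b i :: (4 set \<Rightarrow> 'k::field) set) = kdim (kboundaries E b i :: (4 set \<Rightarrow> 'l::field) set)"
proof -
  have C: "kbasis E b (Suc i) \<subseteq> {F. card F = Suc i}" by (auto simp: kbasis_def)
  show ?thesis unfolding kdim_def kbound_eq fsp.dim_span by (rule rank_indep[OF C])
qed

lemma kcycles_dim:
  fixes E :: "(4 \<Rightarrow> nat) set"
  shows "kdim (kcycles E b i :: (4 set \<Rightarrow> 'k::field) set) =
     (case i of 0 \<Rightarrow> card (kbasis E b 0) | Suc m \<Rightarrow> card (kbasis E b (Suc m)) - kdim (kboundaries E b m :: (4 set \<Rightarrow> 'k) set))"
proof (cases i)
  case 0
  then have "(kcycles E b i :: (4 set \<Rightarrow> 'k) set) = kchains E b 0" by (auto simp: kcycles_def)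
  then show ?thesis using 0 kchains_dim by (simp add: kdim_def)
next
  case (Suc m)
  have eq: "(kcycles E b i :: (4 set \<Rightarrow> 'k) set) = {x \<in> kchains E b (Suc m). kdiff E b m x = 0}"
    using Suc by (auto simp: kcycles_def zero_fun_def)
  have "fsp.dim {x \<in> (kchains E b (Suc m) :: (4 set \<Rightarrow> 'k) set). kdiff E b m x = 0} + fsp.dim (kdiff E b m ` (kchains E b (Suc m) :: (4 set \<Rightarrow> 'k) set))
     = fsp.dim (kchains E b (Suc m) :: (4 set \<Rightarrow> 'k) set)"
    by (rule rank_nullity_fun[where f = "kdiff E b m" and S = "kchains E b (Suc m)"])
       (simp_all add: kdiff_add kdiff_scale kchains_subspace)
  moreover have "fsp.dim (kchains E b (Suc m) :: (4 set \<Rightarrow> 'k) set) = card (kbasis E b (Suc m))"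
    by (rule kchains_dim)
  ultimately show ?thesis using Suc eq
    by (simp add: kdim_def kboundaries_def)
qed

lemma tor_indep:
  fixes E :: "(4 \<Rightarrow> nat) set"
  shows "tor_dim_deg TYPE('k::field) E i b = tor_dim_deg TYPE('l::field) E i b"
proof (cases i)
  case 0
  have "kdim (kboundaries E b 0 :: (4 set \<Rightarrow> 'k) set) = kdim (kboundaries E b 0 :: (4 set \<Rightarrow> 'l) set)"
    by (rule kbound_indep)
  then show ?thesis unfolding tor_dim_deg_def kcycles_dim using 0 by simp
next
  case (Suc m)
  have "kdim (kboundaries E b m :: (4 set \<Rightarrow> 'k) set) = kdim (kboundaries E b m :: (4 set \<Rightarrow> 'l) set)"
    by (rule kbound_indep)
  moreover have "kdim (kboundaries E b (Suc m) :: (4 set \<Rightarrow> 'k) set) = kdim (kboundaries E b (Suc m) :: (4 set \<Rightarrow> 'l) set)"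
    by (rule kbound_indep)
  ultimately show ?thesis unfolding tor_dim_deg_def kcycles_dim using Suc by simp
qed

theorem theorem10:
  fixes E :: "(4 \<Rightarrow> nat) set" and i :: nat
  assumes "finite E"
  shows "betti TYPE('k::field) E i = betti TYPE('l::field) E i"
  unfolding betti_def using tor_indep[of E i, where 'k='k and 'l='l] by simp

end
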